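(* Let $G=(V,E)$ be a finite simple undirected graph, $\Gamma$ a subgroup of $\mathrm{Aut}(G)$, and $(G,\mathcal{C})$ the colored graph whose coloring is given by the $\Gamma$-orbits. (i) $(G,\mathcal{C})$ is $2$-path regular (satisfies (M1)) with respect to any ordering of the vertex color classes. (ii) Let $(v_{\sigma_1},\dots,v_{\sigma_p})$ be a perfect elimination ordering of $G$. Set $\eta_1=c(v_{\sigma_1})$; given $\eta_1,\dots,\eta_{k-1}$ for $2\le k\le r$, let $v_k$ be the first vertex in the peo lying in $V\setminus\bigcup_{i=1}^{k-1}V_{\eta_i}$ and set $\eta_k=c(v_k)$. Then $(V_{\eta_1},\dots,V_{\eta_r})$ is a color perfect elimination ordering. (iii) If $G$ is decomposable, then $(G,\mathcal{C})$ is CER with respect to any cpeo. (iv) If $G$ is decomposable and $\Gamma$ is generously transitive or cyclic, then $(G,\mathcal{C})$ is symmetric CER with respect to any cpeo.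
   Context: $\mathrm{Aut}(G)$: permutations $\sigma$ of $V$ with $\sigma(v)\sim\sigma(w)\iff v\sim w$. $\tilde E=E\cup\{\{v\}:v\in V\}$; $\Gamma$ acts by $\sigma\cdot\{v,w\}=\{\sigma(v),\sigma(w)\}$. Orbit coloring: vertex color classes $V_1,\dots,V_r$ are the $\Gamma$-orbits on $V$, edge color classes are the $\Gamma$-orbits on $E$; $c(v,w)$ is the color of $\{v,w\}\in\tilde E$, loops colored by the index of the vertex orbit, $c(v)=c(v,v)$. A vertex is simplicial if its neighbours form a clique; a perfect elimination ordering (peo) $(v_{\sigma_1},\dots,v_{\sigma_p})$ has each $v_{\sigma_k}$ simplicial in $G[\{v_{\sigma_k},\dots,v_{\sigma_p}\}]$. $G$ is decomposable if every induced cycle has length $3$ (equivalently, $G$ has a peo). For an ordering $(V_{\eta_1},\dots,V_{\eta_r})$: it is a color perfect elimination ordering (cpeo) if every $v\in V_{\eta_i}$ is simplicial in $G[V_{\eta_i}\cup\dots\cup V_{\eta_r}]$; $\pi(v)=i$ iff $v\in V_{\eta_i}$, $V_{\le i}=V_{\eta_1}\cup\dots\cup V_{\eta_i}$; for $\{v,w\}\in\tilde E$, $m_{v\to w}(k,h)=|\{u\in V_{\le\min(\pi(v),\pi(w))}: c(v,u)=k, c(u,w)=h\}|$, $m_{v\leftrightarrow w}(k,h)=m_{v\to w}(k,h)+m_{v\to w}(h,k)$; $F_i=\{c(v,w):\{v,w\}\in\tilde E, c(v)=c(w)=i\}$, $F=\bigcup_iF_i$. (M1): $c(v,w)=c(v',w')$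 implies $m_{v\leftrightarrow w}=m_{v'\leftrightarrow w'}$. (M2): $c(v)=c(w)$ implies $m_{v\to w}(k,h)=m_{w\to v}(k,h)$ for all $k,h\in F$. CER with respect to an ordering: cpeo and (M1); symmetric CER: additionally (M2). $\Gamma$ is generously transitive if for every orbit $V_i$ and distinct $a,b\in V_i$ there is $\sigma\in\Gamma$ swapping $a$ and $b$. *)

theory Defs
  imports "HOL-Combinatorics.Permutations"
begin

definition simple_graph :: "'a set \<Rightarrow> ('a \<Rightarrow> 'a \<Rightarrow> bool) \<Rightarrow> bool" where
  "simple_graph V adj \<longleftrightarrow> finite V \<and> (\<forall>v w. adj v w \<longrightarrow> v \<in> V \<and> w \<in> V)
     \<and> (\<forall>v w. adj v w \<longrightarrow> adj w v) \<and> (\<forall>v. \<not> adj v v)"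

definition Aut :: "'a set \<Rightarrow> ('a \<Rightarrow> 'a \<Rightarrow> bool) \<Rightarrow> ('a \<Rightarrow> 'a) set" where
  "Aut V adj = {\<sigma>. \<sigma> permutes V \<and> (\<forall>v\<in>V. \<forall>w\<in>V. adj (\<sigma> v) (\<sigma> w) \<longleftrightarrow> adj v w)}"

definition subgroup_Aut :: "('a \<Rightarrow> 'a) set \<Rightarrow> 'a set \<Rightarrow> ('a \<Rightarrow> 'a \<Rightarrow> bool) \<Rightarrow> bool" where
  "subgroup_Aut \<Gamma> V adj \<longleftrightarrow> \<Gamma> \<subseteq> Aut V adj \<and> id \<in> \<Gamma>
     \<and> (\<forall>\<sigma>\<in>\<Gamma>. \<forall>\<tau>\<in>\<Gamma>. \<sigma> \<circ> \<tau> \<in> \<Gamma>) \<and> (\<forall>\<sigma>\<in>\<Gamma>. inv \<sigma> \<in> \<Gamma>)"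

definition vorbit :: "('a \<Rightarrow> 'a) set \<Rightarrow> 'a \<Rightarrow> 'a set" where
  "vorbit \<Gamma> v = (\<lambda>\<sigma>. \<sigma> v) ` \<Gamma>"

definition vorbits :: "('a \<Rightarrow> 'a) set \<Rightarrow> 'a set \<Rightarrow> 'a set set" where
  "vorbits \<Gamma> V = vorbit \<Gamma> ` V"

definition Etil :: "'a set \<Rightarrow> ('a \<Rightarrow> 'a \<Rightarrow> bool) \<Rightarrow> 'a \<Rightarrow> 'a \<Rightarrow> bool" where
  "Etil V adj v w \<longleftrightarrow> (v = w \<and> v \<in> V) \<or> adj v w"

text \<open>Orbit coloring: the color c(v,w) of {v,w} is its Gamma-orbit (colors are orbits);
  c(v) = c(v,v) is the orbit of the loop {v}, which corresponds to the orbit of v.\<close>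
definition ecol :: "('a \<Rightarrow> 'a) set \<Rightarrow> 'a \<Rightarrow> 'a \<Rightarrow> 'a set set" where
  "ecol \<Gamma> v w = (\<lambda>\<sigma>. {\<sigma> v, \<sigma> w}) ` \<Gamma>"

definition vcol :: "('a \<Rightarrow> 'a) set \<Rightarrow> 'a \<Rightarrow> 'a set set" where
  "vcol \<Gamma> v = ecol \<Gamma> v v"

text \<open>An ordering of the vertex color classes (0-indexed list).\<close>
definition color_order :: "('a \<Rightarrow> 'a) set \<Rightarrow> 'a set \<Rightarrow> 'a set list \<Rightarrow> bool" where
  "color_order \<Gamma> V ord \<longleftrightarrow> distinct ord \<and> set ord = vorbits \<Gamma> V"

definition pos :: "'a set list \<Rightarrow> 'a \<Rightarrow> nat" where
  "pos ord v = (THE i. i < length ord \<and> v \<in> ord ! i)"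

definition Vle :: "'a set list \<Rightarrow> nat \<Rightarrow> 'a set" where
  "Vle ord i = \<Union> (set (take (Suc i) ord))"

definition mto :: "'a set \<Rightarrow> ('a \<Rightarrow> 'a \<Rightarrow> bool) \<Rightarrow> ('a \<Rightarrow> 'a) set \<Rightarrow> 'a set list
    \<Rightarrow> 'a \<Rightarrow> 'a \<Rightarrow> 'a set set \<Rightarrow> 'a set set \<Rightarrow> nat" where
  "mto V adj \<Gamma> ord v w k h = card {u \<in> Vle ord (min (pos ord v) (pos ord w)).
      Etil V adj v u \<and> Etil V adj u w \<and> ecol \<Gamma> v u = k \<and> ecol \<Gamma> u w = h}"

definition mboth :: "'a set \<Rightarrow> ('a \<Rightarrow> 'a \<Rightarrow> bool) \<Rightarrow> ('a \<Rightarrow> 'a) set \<Rightarrow> 'a set list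
    \<Rightarrow> 'a \<Rightarrow> 'a \<Rightarrow> 'a set set \<Rightarrow> 'a set set \<Rightarrow> nat" where
  "mboth V adj \<Gamma> ord v w k h = mto V adj \<Gamma> ord v w k h + mto V adj \<Gamma> ord v w h k"

definition M1 :: "'a set \<Rightarrow> ('a \<Rightarrow> 'a \<Rightarrow> bool) \<Rightarrow> ('a \<Rightarrow> 'a) set \<Rightarrow> 'a set list \<Rightarrow> bool" where
  "M1 V adj \<Gamma> ord \<longleftrightarrow> (\<forall>v w v' w'. Etil V adj v w \<longrightarrow> Etil V adj v' w'
     \<longrightarrow> ecol \<Gamma> v w = ecol \<Gamma> v' w'
     \<longrightarrow> (\<forall>k h. mboth V adj \<Gamma> ord v w k h = mboth V adj \<Gamma> ord v' w' k h))"

definition Fcols :: "'a set \<Rightarrow> ('a \<Rightarrow> 'a \<Rightarrow> bool) \<Rightarrow> ('a \<Rightarrow> 'a) set \<Rightarrow> 'a set set set" where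
  "Fcols V adj \<Gamma> = {ecol \<Gamma> v w | v w. Etil V adj v w \<and> vcol \<Gamma> v = vcol \<Gamma> w}"

definition M2 :: "'a set \<Rightarrow> ('a \<Rightarrow> 'a \<Rightarrow> bool) \<Rightarrow> ('a \<Rightarrow> 'a) set \<Rightarrow> 'a set list \<Rightarrow> bool" where
  "M2 V adj \<Gamma> ord \<longleftrightarrow> (\<forall>v w. Etil V adj v w \<longrightarrow> vcol \<Gamma> v = vcol \<Gamma> w
     \<longrightarrow> (\<forall>k\<in>Fcols V adj \<Gamma>. \<forall>h\<in>Fcols V adj \<Gamma>.
            mto V adj \<Gamma> ord v w k h = mto V adj \<Gamma> ord w v k h))"

definition simplicial :: "('a \<Rightarrow> 'a \<Rightarrow> bool) \<Rightarrow> 'a set \<Rightarrow> 'a \<Rightarrow> bool" where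
  "simplicial adj S v \<longleftrightarrow> (\<forall>a\<in>S. \<forall>b\<in>S. adj v a \<longrightarrow> adj v b \<longrightarrow> a \<noteq> b \<longrightarrow> adj a b)"

definition peo :: "'a set \<Rightarrow> ('a \<Rightarrow> 'a \<Rightarrow> bool) \<Rightarrow> 'a list \<Rightarrow> bool" where
  "peo V adj vs \<longleftrightarrow> distinct vs \<and> set vs = V
     \<and> (\<forall>k<length vs. simplicial adj (set (drop k vs)) (vs ! k))"

definition cpeo :: "('a \<Rightarrow> 'a \<Rightarrow> bool) \<Rightarrow> 'a set list \<Rightarrow> bool" where
  "cpeo adj ord \<longleftrightarrow> (\<forall>i<length ord. \<forall>v\<in>ord ! i. simplicial adj (\<Union> (set (drop i ord))) v)"

definition CER :: "'a set \<Rightarrow> ('a \<Rightarrow> 'a \<Rightarrow> bool) \<Rightarrow> ('a \<Rightarrow> 'a) set \<Rightarrow> 'a set list \<Rightarrow> bool" where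
  "CER V adj \<Gamma> ord \<longleftrightarrow> cpeo adj ord \<and> M1 V adj \<Gamma> ord"

definition symCER :: "'a set \<Rightarrow> ('a \<Rightarrow> 'a \<Rightarrow> bool) \<Rightarrow> ('a \<Rightarrow> 'a) set \<Rightarrow> 'a set list \<Rightarrow> bool" where
  "symCER V adj \<Gamma> ord \<longleftrightarrow> CER V adj \<Gamma> ord \<and> M2 V adj \<Gamma> ord"

definition induced_cycle :: "'a set \<Rightarrow> ('a \<Rightarrow> 'a \<Rightarrow> bool) \<Rightarrow> 'a list \<Rightarrow> bool" where
  "induced_cycle V adj cs \<longleftrightarrow> length cs \<ge> 3 \<and> distinct cs \<and> set cs \<subseteq> V \<and>
     (\<forall>i<length cs. \<forall>j<length cs. adj (cs ! i) (cs ! j) \<longleftrightarrow>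
        (j = Suc i mod length cs \<or> i = Suc j mod length cs))"

definition decomposable :: "'a set \<Rightarrow> ('a \<Rightarrow> 'a \<Rightarrow> bool) \<Rightarrow> bool" where
  "decomposable V adj \<longleftrightarrow> (\<forall>cs. induced_cycle V adj cs \<longrightarrow> length cs = 3)"

definition generously_transitive :: "('a \<Rightarrow> 'a) set \<Rightarrow> 'a set \<Rightarrow> bool" where
  "generously_transitive \<Gamma> V \<longleftrightarrow> (\<forall>Orb\<in>vorbits \<Gamma> V. \<forall>a\<in>Orb. \<forall>b\<in>Orb. a \<noteq> b \<longrightarrow>
      (\<exists>\<sigma>\<in>\<Gamma>. \<sigma> a = b \<and> \<sigma> b = a))"

definition cyclic_grp :: "('a \<Rightarrow> 'a) set \<Rightarrow> bool" where
  "cyclic_grp \<Gamma> \<longleftrightarrow> (\<exists>g\<in>\<Gamma>. \<Gamma> = {g ^^ n | n. True})"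

fun peo_color_order :: "('a \<Rightarrow> 'a set) \<Rightarrow> 'a list \<Rightarrow> nat \<Rightarrow> 'a set list" where
  "peo_color_order orb vs 0 = []"
| "peo_color_order orb vs (Suc k) =
     (let prev = peo_color_order orb vs k
      in prev @ [orb (hd (filter (\<lambda>x. x \<notin> \<Union> (set prev)) vs))])"

end

theory Submission
  imports Defs
begin

lemma pco_len: "length (peo_color_order orb vs k) = k"
  by (induction k) (simp_all add: Let_def)

lemma pco_nth: "i < k \<Longrightarrow> peo_color_order orb vs k ! i =
   orb (hd (filter (\<lambda>x. x \<notin> \<Union> (set (peo_color_order orb vs i))) vs))"
proof (induction k)
  case 0 then show ?case by simp
next
  case (Suc k)
  show ?case
  proof (cases "i < k")
    case True then show ?thesis using Suc by (simp add: Let_def nth_append pco_len)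
  next
    case False then have "i = k" using Suc by simp
    then show ?thesis by (simp add: Let_def nth_append pco_len)
  qed
qed

lemma first_filter: "\<exists>x\<in>set xs. Q x \<Longrightarrow>
  \<exists>j<length xs. hd (filter Q xs) = xs ! j \<and> Q (xs ! j) \<and> (\<forall>t<j. \<not> Q (xs ! t))"
proof (induction xs)
  case Nil then show ?case by simp
next
  case (Cons a xs)
  show ?case
  proof (cases "Q a")
    case True then show ?thesis by force
  next
    case False
    then have "\<exists>x\<in>set xs. Q x" using Cons.prems by auto
    then obtain j where j: "j < length xs" "hd (filter Q xs) = xs ! j" "Q (xs ! j)" "\<forall>t<j. \<not> Q (xs ! t)"
      using Cons.IH by blast
    have "\<forall>t<Suc j. \<not> Q ((a # xs) ! t)"
      using j(4) False by (auto simp: less_Suc_eq_0_disj)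
    then show ?thesis using j False by (intro exI[of _ "Suc j"]) auto
  qed
qed

lemma in_set_drop_nth: "Ob \<in> set (drop i L) \<Longrightarrow> \<exists>m. i \<le> m \<and> m < length L \<and> Ob = L ! m"
proof -
  assume "Ob \<in> set (drop i L)"
  then obtain ia where "ia < length (drop i L)" "drop i L ! ia = Ob" by (metis in_set_conv_nth)
  then show ?thesis by (intro exI[of _ "i + ia"]) auto
qed

context
  fixes V :: "'a set" and adj :: "'a \<Rightarrow> 'a \<Rightarrow> bool" and \<Gamma> :: "('a \<Rightarrow> 'a) set"
  assumes G: "simple_graph V adj"
    and sub: "subgroup_Aut \<Gamma> V adj"
begin

lemma Gperm: "\<sigma> \<in> \<Gamma> \<Longrightarrow> \<sigma> permutes V"
  using sub unfolding subgroup_Aut_def Aut_def by auto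

lemma Ginv: "\<sigma> \<in> \<Gamma> \<Longrightarrow> inv \<sigma> \<in> \<Gamma>"
  using sub unfolding subgroup_Aut_def by auto

lemma Gcomp: "\<sigma> \<in> \<Gamma> \<Longrightarrow> \<tau> \<in> \<Gamma> \<Longrightarrow> \<sigma> \<circ> \<tau> \<in> \<Gamma>"
  using sub unfolding subgroup_Aut_def by auto

lemma Gid: "id \<in> \<Gamma>"
  using sub unfolding subgroup_Aut_def by auto

lemma Ginv1: "\<sigma> \<in> \<Gamma> \<Longrightarrow> inv \<sigma> (\<sigma> x) = x"
  using Gperm permutes_inverses by metis

lemma Ginv2: "\<sigma> \<in> \<Gamma> \<Longrightarrow> \<sigma> (inv \<sigma> x) = x"
  using Gperm permutes_inverses by metis

lemma Ginj: "\<sigma> \<in> \<Gamma> \<Longrightarrow> \<sigma> x = \<sigma> y \<longleftrightarrow> x = y"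
  using Ginv1 by metis

lemma GinV: "\<sigma> \<in> \<Gamma> \<Longrightarrow> \<sigma> x \<in> V \<longleftrightarrow> x \<in> V"
  using Gperm permutes_in_image by metis

lemma adjV: "adj x y \<Longrightarrow> x \<in> V \<and> y \<in> V"
  using G unfolding simple_graph_def by auto

lemma adj_sym: "adj x y = adj y x"
  using G unfolding simple_graph_def by auto

lemma Gadj: assumes "\<sigma> \<in> \<Gamma>" shows "adj (\<sigma> x) (\<sigma> y) = adj x y"
proof (cases "x \<in> V \<and> y \<in> V")
  case True
  then show ?thesis using assms sub unfolding subgroup_Aut_def Aut_def by auto
next
  case False
  then show ?thesis using adjV GinV[OF assms] by metis
qed

lemma Etil_sym: "Etil V adj x y = Etil V adj y x"
  unfolding Etil_def using adj_sym by auto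

lemma GEtil: "\<sigma> \<in> \<Gamma> \<Longrightarrow> Etil V adj (\<sigma> x) (\<sigma> y) = Etil V adj x y"
  unfolding Etil_def using Gadj Ginj GinV by metis

lemma Gecol: assumes s: "\<sigma> \<in> \<Gamma>" shows "ecol \<Gamma> (\<sigma> x) (\<sigma> y) = ecol \<Gamma> x y"
proof
  show "ecol \<Gamma> (\<sigma> x) (\<sigma> y) \<subseteq> ecol \<Gamma> x y"
  proof
    fix e assume "e \<in> ecol \<Gamma> (\<sigma> x) (\<sigma> y)"
    then obtain \<tau> where t: "\<tau> \<in> \<Gamma>" "e = {\<tau> (\<sigma> x), \<tau> (\<sigma> y)}" unfolding ecol_def by auto
    then have "e = {(\<tau> \<circ> \<sigma>) x, (\<tau> \<circ> \<sigma>) y}" by simp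
    then show "e \<in> ecol \<Gamma> x y" unfolding ecol_def using Gcomp[OF t(1) s] by blast
  qed
  show "ecol \<Gamma> x y \<subseteq> ecol \<Gamma> (\<sigma> x) (\<sigma> y)"
  proof
    fix e assume "e \<in> ecol \<Gamma> x y"
    then obtain \<tau> where t: "\<tau> \<in> \<Gamma>" "e = {\<tau> x, \<tau> y}" unfolding ecol_def by auto
    have "\<tau> \<circ> inv \<sigma> \<in> \<Gamma>" using Gcomp Ginv s t by auto
    moreover have "e = {(\<tau> \<circ> inv \<sigma>) (\<sigma> x), (\<tau> \<circ> inv \<sigma>) (\<sigma> y)}"
      using t Ginv1[OF s] by simp
    ultimately show "e \<in> ecol \<Gamma> (\<sigma> x) (\<sigma> y)" unfolding ecol_def by blast
  qed
qed

lemma ecol_sym: "ecol \<Gamma> x y = ecol \<Gamma> y x"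
  unfolding ecol_def by (simp add: insert_commute)

lemma ecol_eqD: assumes "ecol \<Gamma> x y = ecol \<Gamma> x' y'"
  shows "\<exists>\<tau>\<in>\<Gamma>. (\<tau> x = x' \<and> \<tau> y = y') \<or> (\<tau> x = y' \<and> \<tau> y = x')"
proof -
  have "{x', y'} \<in> ecol \<Gamma> x' y'" unfolding ecol_def using Gid by (auto intro!: rev_image_eqI[of id])
  then have "{x', y'} \<in> ecol \<Gamma> x y" using assms by simp
  then obtain \<tau> where "\<tau> \<in> \<Gamma>" "{x', y'} = {\<tau> x, \<tau> y}" unfolding ecol_def by auto
  then show ?thesis by (auto simp: doubleton_eq_iff)
qed

lemma ecol_Etil: assumes "ecol \<Gamma> x y = ecol \<Gamma> x' y'" "Etil V adj x y"
  shows "Etil V adj x' y'"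
  using ecol_eqD[OF assms(1)] GEtil Etil_sym assms(2) by metis

lemma vorbit_G: "\<sigma> \<in> \<Gamma> \<Longrightarrow> \<sigma> y \<in> vorbit \<Gamma> a \<longleftrightarrow> y \<in> vorbit \<Gamma> a"
proof
  assume s: "\<sigma> \<in> \<Gamma>"
  have fwd: "\<tau> \<in> \<Gamma> \<Longrightarrow> z \<in> vorbit \<Gamma> a \<Longrightarrow> \<tau> z \<in> vorbit \<Gamma> a" for \<tau> z
  proof -
    assume "\<tau> \<in> \<Gamma>" "z \<in> vorbit \<Gamma> a"
    then obtain \<rho> where "\<rho> \<in> \<Gamma>" "z = \<rho> a" unfolding vorbit_def by auto
    then show ?thesis using Gcomp[OF \<open>\<tau> \<in> \<Gamma>\<close>] unfolding vorbit_def
      by (auto intro!: rev_image_eqI[of "\<tau> \<circ> \<rho>"])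
  qed
  { assume "\<sigma> y \<in> vorbit \<Gamma> a" then show "y \<in> vorbit \<Gamma> a"
      using fwd[OF Ginv[OF s]] Ginv1[OF s] by metis }
  { assume "y \<in> vorbit \<Gamma> a" then show "\<sigma> y \<in> vorbit \<Gamma> a" using fwd[OF s] by metis }
qed

lemma vorbit_self: "a \<in> vorbit \<Gamma> a"
  unfolding vorbit_def using Gid by (auto intro!: rev_image_eqI[of id])

lemma vorbit_same: "y \<in> vorbit \<Gamma> a \<Longrightarrow> vorbit \<Gamma> y = vorbit \<Gamma> a"
proof -
  assume "y \<in> vorbit \<Gamma> a"
  then obtain \<tau> where t: "\<tau> \<in> \<Gamma>" "y = \<tau> a" unfolding vorbit_def by auto
  show ?thesis
  proof
    show "vorbit \<Gamma> y \<subseteq> vorbit \<Gamma> a"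
    proof
      fix z assume "z \<in> vorbit \<Gamma> y"
      then obtain \<rho> where r: "\<rho> \<in> \<Gamma>" "z = \<rho> y" unfolding vorbit_def by auto
      then show "z \<in> vorbit \<Gamma> a" unfolding vorbit_def using t Gcomp[OF r(1) t(1)]
        by (auto intro!: rev_image_eqI[of "\<rho> \<circ> \<tau>"])
    qed
    show "vorbit \<Gamma> a \<subseteq> vorbit \<Gamma> y"
    proof
      fix z assume "z \<in> vorbit \<Gamma> a"
      then obtain \<rho> where r: "\<rho> \<in> \<Gamma>" "z = \<rho> a" unfolding vorbit_def by auto
      have "\<rho> \<circ> inv \<tau> \<in> \<Gamma>" using Gcomp Ginv r t by auto
      moreover have "z = (\<rho> \<circ> inv \<tau>) y" using r t Ginv1 by simp
      ultimately show "z \<in> vorbit \<Gamma> y" unfolding vorbit_def by blast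
    qed
  qed
qed

lemma vorbit_sub: "a \<in> V \<Longrightarrow> vorbit \<Gamma> a \<subseteq> V"
  unfolding vorbit_def using GinV by auto

lemma orb_in_G: assumes "\<forall>Ob\<in>set ord. \<exists>x. Ob = vorbit \<Gamma> x" "\<sigma> \<in> \<Gamma>" "Ob \<in> set ord"
  shows "\<sigma> y \<in> Ob \<longleftrightarrow> y \<in> Ob"
proof -
  obtain x where "Ob = vorbit \<Gamma> x" using assms(1,3) by blast
  then show ?thesis using vorbit_G[OF assms(2)] by simp
qed

lemma pos_G: assumes "\<forall>Ob\<in>set ord. \<exists>x. Ob = vorbit \<Gamma> x" "\<sigma> \<in> \<Gamma>"
  shows "pos ord (\<sigma> v) = pos ord v"
proof -
  have "\<And>i. i < length ord \<Longrightarrow> \<sigma> v \<in> ord ! i \<longleftrightarrow> v \<in> ord ! i"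
    using orb_in_G[OF assms] nth_mem by blast
  then have "(\<lambda>i. i < length ord \<and> \<sigma> v \<in> ord ! i) = (\<lambda>i. i < length ord \<and> v \<in> ord ! i)"
    by blast
  then show ?thesis unfolding pos_def by simp
qed

lemma Vle_G: assumes "\<forall>Ob\<in>set ord. \<exists>x. Ob = vorbit \<Gamma> x" "\<sigma> \<in> \<Gamma>"
  shows "\<sigma> u \<in> Vle ord p \<longleftrightarrow> u \<in> Vle ord p"
proof -
  have *: "\<sigma> u \<in> Ob \<longleftrightarrow> u \<in> Ob" if "Ob \<in> set (take (Suc p) ord)" for Ob
  proof -
    have "Ob \<in> set ord" using that by (rule in_set_takeD)
    then show ?thesis by (rule orb_in_G[OF assms])
  qed
  show ?thesis unfolding Vle_def Union_iff using * by auto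
qed

definition S where "S ord v w k h = {u \<in> Vle ord (min (pos ord v) (pos ord w)).
      Etil V adj v u \<and> Etil V adj u w \<and> ecol \<Gamma> v u = k \<and> ecol \<Gamma> u w = h}"

lemma mto_S: "mto V adj \<Gamma> ord v w k h = card (S ord v w k h)"
  unfolding mto_def S_def by simp

lemma mto_G: assumes o: "\<forall>Ob\<in>set ord. \<exists>x. Ob = vorbit \<Gamma> x" and s: "\<sigma> \<in> \<Gamma>"
  shows "mto V adj \<Gamma> ord (\<sigma> v) (\<sigma> w) k h = mto V adj \<Gamma> ord v w k h"
proof -
  have mem: "\<sigma> u \<in> S ord (\<sigma> v) (\<sigma> w) k h \<longleftrightarrow> u \<in> S ord v w k h" for u
    unfolding S_def using pos_G[OF o s] Vle_G[OF o s] GEtil[OF s] Gecol[OF s] by simp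
  have "S ord (\<sigma> v) (\<sigma> w) k h = \<sigma> ` S ord v w k h"
  proof
    show "\<sigma> ` S ord v w k h \<subseteq> S ord (\<sigma> v) (\<sigma> w) k h" using mem by auto
    show "S ord (\<sigma> v) (\<sigma> w) k h \<subseteq> \<sigma> ` S ord v w k h"
    proof
      fix u assume "u \<in> S ord (\<sigma> v) (\<sigma> w) k h"
      then have "\<sigma> (inv \<sigma> u) \<in> S ord (\<sigma> v) (\<sigma> w) k h" using Ginv2[OF s] by simp
      then have "inv \<sigma> u \<in> S ord v w k h" using mem by blast
      then show "u \<in> \<sigma> ` S ord v w k h" using Ginv2[OF s] by (metis image_eqI)
    qed
  qed
  moreover have "inj \<sigma>" using Ginj[OF s] by (auto intro: injI)
  ultimately show ?thesis unfolding mto_S by (simp add: card_image inj_on_subset)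
qed

lemma mto_swap: "mto V adj \<Gamma> ord v w k h = mto V adj \<Gamma> ord w v h k"
proof -
  have "S ord v w k h = S ord w v h k"
    unfolding S_def using Etil_sym ecol_sym by (auto simp: min.commute)
  then show ?thesis unfolding mto_S by simp
qed

lemma M1_holds: assumes o: "\<forall>Ob\<in>set ord. \<exists>x. Ob = vorbit \<Gamma> x"
  shows "M1 V adj \<Gamma> ord"
  unfolding M1_def
proof (intro allI impI)
  fix v w v' w' k h
  assume "ecol \<Gamma> v w = ecol \<Gamma> v' w'"
  then obtain \<tau> where t: "\<tau> \<in> \<Gamma>" "(\<tau> v = v' \<and> \<tau> w = w') \<or> (\<tau> v = w' \<and> \<tau> w = v')"
    using ecol_eqD by blast
  from t(2) show "mboth V adj \<Gamma> ord v w k h = mboth V adj \<Gamma> ord v' w' k h"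
  proof
    assume "\<tau> v = v' \<and> \<tau> w = w'"
    then show ?thesis unfolding mboth_def using mto_G[OF o t(1)] by metis
  next
    assume "\<tau> v = w' \<and> \<tau> w = v'"
    then show ?thesis unfolding mboth_def using mto_G[OF o t(1)] mto_swap by (metis add.commute)
  qed
qed

lemma color_order_orb: "color_order \<Gamma> V ord \<Longrightarrow> \<forall>Ob\<in>set ord. \<exists>x. Ob = vorbit \<Gamma> x"
  unfolding color_order_def vorbits_def by auto

lemma Etil_V: "Etil V adj x y \<Longrightarrow> x \<in> V \<and> y \<in> V"
  unfolding Etil_def using adjV by auto

lemma finite_S: "finite (S ord v w k h)"
proof -
  have "S ord v w k h \<subseteq> V" unfolding S_def using Etil_V by auto
  moreover have "finite V" using G unfolding simple_graph_def by auto
  ultimately show ?thesis by (rule finite_subset)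
qed

lemma vcol_orb: "vcol \<Gamma> a = vcol \<Gamma> b \<Longrightarrow> b \<in> vorbit \<Gamma> a"
  unfolding vcol_def vorbit_def using ecol_eqD by blast

lemma Fcol_orb: assumes "ecol \<Gamma> v u = k" "k \<in> Fcols V adj \<Gamma>"
  shows "u \<in> vorbit \<Gamma> v"
proof -
  obtain a b where ab: "k = ecol \<Gamma> a b" "vcol \<Gamma> a = vcol \<Gamma> b"
    using assms(2) unfolding Fcols_def by auto
  have b: "b \<in> vorbit \<Gamma> a" using vcol_orb[OF ab(2)] .
  obtain \<tau> where t: "\<tau> \<in> \<Gamma>" "(\<tau> a = v \<and> \<tau> b = u) \<or> (\<tau> a = u \<and> \<tau> b = v)"
    using ecol_eqD[of a b v u] ab assms(1) by auto
  have ta: "\<tau> a \<in> vorbit \<Gamma> a" using vorbit_G[OF t(1)] vorbit_self by blast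
  have tb: "\<tau> b \<in> vorbit \<Gamma> a" using vorbit_G[OF t(1)] b by blast
  have "vorbit \<Gamma> (\<tau> a) = vorbit \<Gamma> a" "vorbit \<Gamma> (\<tau> b) = vorbit \<Gamma> a"
    using vorbit_same ta tb by auto
  then show ?thesis using t(2) vorbit_self by metis
qed

lemma M2_gt_pair: assumes o: "\<forall>Ob\<in>set ord. \<exists>x. Ob = vorbit \<Gamma> x"
  and gt: "generously_transitive \<Gamma> V" and e: "Etil V adj v w" and c: "vcol \<Gamma> v = vcol \<Gamma> w"
  shows "mto V adj \<Gamma> ord v w k h = mto V adj \<Gamma> ord w v k h"
proof (cases "v = w")
  case True then show ?thesis by simp
next
  case False
  have vV: "v \<in> V" using Etil_V e by blast
  have "vorbit \<Gamma> v \<in> vorbits \<Gamma> V" unfolding vorbits_def using vV by blast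
  moreover have "w \<in> vorbit \<Gamma> v" using vcol_orb[OF c] .
  ultimately obtain \<sigma> where s: "\<sigma> \<in> \<Gamma>" "\<sigma> v = w" "\<sigma> w = v"
    using gt False vorbit_self unfolding generously_transitive_def by blast
  show ?thesis using mto_G[OF o s(1), of v w k h] s by simp
qed

lemma M2_ab_le: assumes o: "\<forall>Ob\<in>set ord. \<exists>x. Ob = vorbit \<Gamma> x"
  and ab: "\<forall>\<sigma>\<in>\<Gamma>. \<forall>\<tau>\<in>\<Gamma>. \<sigma> \<circ> \<tau> = \<tau> \<circ> \<sigma>"
  and m: "\<mu> \<in> \<Gamma>" "w = \<mu> v"
  and k: "k \<in> Fcols V adj \<Gamma>"
  shows "card (S ord v w k h) \<le> card (S ord w v k h)"
proof -
  have comm: "\<sigma> (\<tau> x) = \<tau> (\<sigma> x)" if "\<sigma> \<in> \<Gamma>" "\<tau> \<in> \<Gamma>" for \<sigma> \<tau> x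
    using ab that by (metis comp_apply)
  define sg where "sg u = (SOME \<sigma>. \<sigma> \<in> \<Gamma> \<and> u = \<sigma> v)" for u
  define \<rho> where "\<rho> u = inv (sg u) w" for u
  have sgp: "sg u \<in> \<Gamma> \<and> u = sg u v" if "u \<in> vorbit \<Gamma> v" for u
  proof -
    have "\<exists>\<sigma>. \<sigma> \<in> \<Gamma> \<and> u = \<sigma> v" using that unfolding vorbit_def by auto
    then show ?thesis unfolding sg_def by (rule someI_ex)
  qed
  have inS: "u \<in> vorbit \<Gamma> v" if "u \<in> S ord v w k h" for u
    using that k Fcol_orb unfolding S_def by blast
  have maps: "\<rho> u \<in> S ord w v k h" if u: "u \<in> S ord v w k h" for u
  proof -
    let ?s = "sg u"
    have s: "?s \<in> \<Gamma>" "u = ?s v" using sgp[OF inS[OF u]] by auto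
    have isv: "inv ?s \<in> \<Gamma>" using Ginv s(1) .
    have ru: "\<rho> u = \<mu> (inv ?s v)" unfolding \<rho>_def m(2) using comm[OF isv m(1)] .
    have e1: "ecol \<Gamma> w (\<rho> u) = ecol \<Gamma> v u"
    proof -
      have "ecol \<Gamma> w (\<rho> u) = ecol \<Gamma> v (inv ?s v)" unfolding ru m(2) by (rule Gecol[OF m(1)])
      also have "\<dots> = ecol \<Gamma> (?s v) (?s (inv ?s v))" by (rule Gecol[OF s(1), symmetric])
      also have "\<dots> = ecol \<Gamma> v u" using Ginv2[OF s(1)] s(2) ecol_sym by metis
      finally show ?thesis .
    qed
    have e2: "ecol \<Gamma> (\<rho> u) v = ecol \<Gamma> u w"
    proof -
      have "ecol \<Gamma> (\<rho> u) v = ecol \<Gamma> (?s (\<rho> u)) (?s v)" by (rule Gecol[OF s(1), symmetric])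
      also have "?s (\<rho> u) = w" unfolding \<rho>_def using Ginv2[OF s(1)] .
      finally show ?thesis using s(2) ecol_sym by metis
    qed
    have uS: "u \<in> Vle ord (min (pos ord v) (pos ord w))" "Etil V adj v u" "Etil V adj u w"
      "ecol \<Gamma> v u = k" "ecol \<Gamma> u w = h" using u unfolding S_def by auto
    have "(inv ?s \<circ> \<mu> \<circ> inv ?s) \<in> \<Gamma>" using Gcomp isv m(1) by auto
    moreover have "(inv ?s \<circ> \<mu> \<circ> inv ?s) u = \<rho> u"
      unfolding \<rho>_def m(2) using s(2) Ginv1[OF s(1)] by (metis comp_apply)
    ultimately have "\<rho> u \<in> Vle ord (min (pos ord v) (pos ord w))"
      using Vle_G[OF o] uS(1) by metis
    then have "\<rho> u \<in> Vle ord (min (pos ord w) (pos ord v))" by (simp add: min.commute)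
    moreover have "Etil V adj w (\<rho> u)" using ecol_Etil[OF e1[symmetric] uS(2)] .
    moreover have "Etil V adj (\<rho> u) v" using ecol_Etil[OF e2[symmetric] uS(3)] .
    ultimately show ?thesis unfolding S_def using e1 e2 uS by auto
  qed
  have inj: "inj_on \<rho> (S ord v w k h)"
  proof
    fix u1 u2 assume u1: "u1 \<in> S ord v w k h" and u2: "u2 \<in> S ord v w k h" and eq: "\<rho> u1 = \<rho> u2"
    let ?s1 = "sg u1" and ?s2 = "sg u2"
    have s1: "?s1 \<in> \<Gamma>" "u1 = ?s1 v" using sgp[OF inS[OF u1]] by auto
    have s2: "?s2 \<in> \<Gamma>" "u2 = ?s2 v" using sgp[OF inS[OF u2]] by auto
    have "\<mu> (inv ?s1 v) = \<mu> (inv ?s2 v)"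
      using eq comm[OF Ginv[OF s1(1)] m(1)] comm[OF Ginv[OF s2(1)] m(1)] unfolding \<rho>_def m(2) by metis
    then have i: "inv ?s1 v = inv ?s2 v" using Ginj[OF m(1)] by blast
    have "u2 = ?s2 (?s1 (inv ?s1 v))" using s2 Ginv2[OF s1(1)] by simp
    also have "\<dots> = ?s1 (?s2 (inv ?s2 v))" using comm[OF s2(1) s1(1)] i by simp
    also have "\<dots> = u1" using s1 Ginv2[OF s2(1)] by simp
    finally show "u1 = u2" by simp
  qed
  show ?thesis using card_inj_on_le[OF inj _ finite_S] maps by blast
qed

lemma M2_ab_pair: assumes o: "\<forall>Ob\<in>set ord. \<exists>x. Ob = vorbit \<Gamma> x"
  and ab: "\<forall>\<sigma>\<in>\<Gamma>. \<forall>\<tau>\<in>\<Gamma>. \<sigma> \<circ> \<tau> = \<tau> \<circ> \<sigma>"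
  and c: "vcol \<Gamma> v = vcol \<Gamma> w"
  and k: "k \<in> Fcols V adj \<Gamma>"
  shows "mto V adj \<Gamma> ord v w k h = mto V adj \<Gamma> ord w v k h"
proof -
  obtain \<mu> where m: "\<mu> \<in> \<Gamma>" "w = \<mu> v" using vcol_orb[OF c] unfolding vorbit_def by auto
  have m2: "inv \<mu> \<in> \<Gamma>" "v = inv \<mu> w" using Ginv[OF m(1)] Ginv1[OF m(1)] m(2) by auto
  show ?thesis unfolding mto_S
    using M2_ab_le[OF o ab m k] M2_ab_le[OF o ab m2 k] by (simp add: le_antisym)
qed

lemma cyclic_ab: "cyclic_grp \<Gamma> \<Longrightarrow> \<forall>\<sigma>\<in>\<Gamma>. \<forall>\<tau>\<in>\<Gamma>. \<sigma> \<circ> \<tau> = \<tau> \<circ> \<sigma>"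
  unfolding cyclic_grp_def by (auto simp flip: funpow_add simp: add.commute)

lemma M2_holds: assumes o: "\<forall>Ob\<in>set ord. \<exists>x. Ob = vorbit \<Gamma> x"
  and g: "generously_transitive \<Gamma> V \<or> cyclic_grp \<Gamma>"
  shows "M2 V adj \<Gamma> ord"
  unfolding M2_def
proof (intro allI impI ballI)
  fix v w k h assume e: "Etil V adj v w" and c: "vcol \<Gamma> v = vcol \<Gamma> w"
    and k: "k \<in> Fcols V adj \<Gamma>"
  from g show "mto V adj \<Gamma> ord v w k h = mto V adj \<Gamma> ord w v k h"
  proof
    assume "generously_transitive \<Gamma> V" then show ?thesis using M2_gt_pair[OF o _ e c] by blast
  next
    assume "cyclic_grp \<Gamma>" then show ?thesis using M2_ab_pair[OF o cyclic_ab c k] by blast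
  qed
qed

lemma simpl_G: assumes T: "\<forall>\<tau>\<in>\<Gamma>. \<forall>y\<in>T. \<tau> y \<in> T" and s: "\<sigma> \<in> \<Gamma>"
  and sx: "simplicial adj T x"
  shows "simplicial adj T (\<sigma> x)"
  unfolding simplicial_def
proof (intro ballI impI)
  fix a b assume a: "a \<in> T" and b: "b \<in> T" and xa: "adj (\<sigma> x) a" and xb: "adj (\<sigma> x) b" and ne: "a \<noteq> b"
  have isv: "inv \<sigma> \<in> \<Gamma>" using Ginv s .
  have a': "inv \<sigma> a \<in> T" "inv \<sigma> b \<in> T" using T isv a b by auto
  have "adj x (inv \<sigma> a)" using xa Gadj[OF s, of x "inv \<sigma> a"] Ginv2[OF s] by simp
  moreover have "adj x (inv \<sigma> b)" using xb Gadj[OF s, of x "inv \<sigma> b"] Ginv2[OF s] by simp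
  moreover have "inv \<sigma> a \<noteq> inv \<sigma> b" using ne Ginv2[OF s] by metis
  ultimately have "adj (inv \<sigma> a) (inv \<sigma> b)" using sx a' unfolding simplicial_def by blast
  then show "adj a b" using Gadj[OF s, of "inv \<sigma> a" "inv \<sigma> b"] Ginv2[OF s] by simp
qed

lemma finite_V: "finite V" using G unfolding simple_graph_def by auto

lemma finite_vorbits: "finite (vorbits \<Gamma> V)"
  unfolding vorbits_def using finite_V by simp

lemma pco_inv: assumes sv: "set vs = V"
  shows "i \<le> card (vorbits \<Gamma> V) \<Longrightarrow>
     distinct (peo_color_order (vorbit \<Gamma>) vs i) \<and> set (peo_color_order (vorbit \<Gamma>) vs i) \<subseteq> vorbits \<Gamma> V
     \<and> (i < card (vorbits \<Gamma> V) \<longrightarrow> (\<exists>x\<in>set vs. x \<notin> \<Union> (set (peo_color_order (vorbit \<Gamma>) vs i))))"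
proof (induction i)
  case 0
  have "V \<noteq> {}" if "0 < card (vorbits \<Gamma> V)"
    using that unfolding vorbits_def by auto
  then show ?case using sv by (auto simp: ex_in_conv)
next
  case (Suc i)
  let ?P = "peo_color_order (vorbit \<Gamma>) vs"
  have IH: "distinct (?P i)" "set (?P i) \<subseteq> vorbits \<Gamma> V" "\<exists>x\<in>set vs. x \<notin> \<Union> (set (?P i))"
    using Suc by auto
  let ?x = "hd (filter (\<lambda>x. x \<notin> \<Union> (set (?P i))) vs)"
  have "filter (\<lambda>x. x \<notin> \<Union> (set (?P i))) vs \<noteq> []" using IH(3) by (simp add: filter_empty_conv)
  then have xin: "?x \<in> set (filter (\<lambda>x. x \<notin> \<Union> (set (?P i))) vs)" by (rule hd_in_set)
  then have xV: "?x \<in> V" and xn: "?x \<notin> \<Union> (set (?P i))" using sv by auto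
  have new: "vorbit \<Gamma> ?x \<notin> set (?P i)" using xn vorbit_self by blast
  have Ps: "?P (Suc i) = ?P i @ [vorbit \<Gamma> ?x]" by (simp add: Let_def)
  have d: "distinct (?P (Suc i))" using IH(1) new Ps by simp
  have sb: "set (?P (Suc i)) \<subseteq> vorbits \<Gamma> V" using IH(2) xV Ps unfolding vorbits_def by auto
  have ne: "\<exists>x\<in>set vs. x \<notin> \<Union> (set (?P (Suc i)))" if lt: "Suc i < card (vorbits \<Gamma> V)"
  proof (rule ccontr)
    assume "\<not> ?thesis"
    then have cov: "V \<subseteq> \<Union> (set (?P (Suc i)))" using sv by auto
    have "vorbits \<Gamma> V \<subseteq> set (?P (Suc i))"
    proof
      fix Ob assume "Ob \<in> vorbits \<Gamma> V"
      then obtain y where y: "y \<in> V" "Ob = vorbit \<Gamma> y" unfolding vorbits_def by auto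
      then obtain Ob' where o': "Ob' \<in> set (?P (Suc i))" "y \<in> Ob'" using cov by auto
      then obtain z where "Ob' = vorbit \<Gamma> z" using sb unfolding vorbits_def by auto
      then have "Ob = Ob'" using vorbit_same o'(2) y(2) by simp
      then show "Ob \<in> set (?P (Suc i))" using o' by simp
    qed
    then have "card (vorbits \<Gamma> V) \<le> card (set (?P (Suc i)))" by (simp add: card_mono)
    also have "\<dots> = Suc i" using d distinct_card pco_len by metis
    finally show False using lt by simp
  qed
  show ?case using d sb ne by blast
qed

lemma part2: assumes p: "peo V adj vs"
  shows "cpeo adj (peo_color_order (vorbit \<Gamma>) vs (card (vorbits \<Gamma> V)))"
  unfolding cpeo_def
proof (intro allI impI ballI)
  let ?r = "card (vorbits \<Gamma> V)"
  let ?P = "peo_color_order (vorbit \<Gamma>) vs"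
  fix i v assume i: "i < length (?P ?r)" and v: "v \<in> ?P ?r ! i"
  have sv: "set vs = V" using p unfolding peo_def by auto
  have ir: "i < ?r" using i by (simp add: pco_len)
  have invr: "distinct (?P ?r)" "set (?P ?r) \<subseteq> vorbits \<Gamma> V" using pco_inv[OF sv, of ?r] by auto
  have invi: "\<exists>x\<in>set vs. x \<notin> \<Union> (set (?P i))" using pco_inv[OF sv, of i] ir by auto
  let ?Q = "\<lambda>x. x \<notin> \<Union> (set (?P i))"
  obtain j where j: "j < length vs" "hd (filter ?Q vs) = vs ! j" "?Q (vs ! j)" "\<forall>t<j. \<not> ?Q (vs ! t)"
    using first_filter[OF invi] by blast
  define x where "x = vs ! j"
  have Pi: "?P ?r ! i = vorbit \<Gamma> x" using pco_nth[OF ir, of "vorbit \<Gamma>" vs] j(2) x_def by simp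
  let ?T = "\<Union> (set (drop i (?P ?r)))"
  have orbs: "\<exists>z. Ob = vorbit \<Gamma> z" if "Ob \<in> set (?P ?r)" for Ob
    using that invr(2) unfolding vorbits_def by auto
  have Tsub: "?T \<subseteq> set (drop j vs)"
  proof
    fix y assume "y \<in> ?T"
    then obtain Ob where Ob: "Ob \<in> set (drop i (?P ?r))" "y \<in> Ob" by (rule UnionE)
    obtain m where m: "i \<le> m" "m < length (?P ?r)" "Ob = ?P ?r ! m" using in_set_drop_nth[OF Ob(1)] by (elim exE conjE)
    have ObP: "Ob \<in> set (?P ?r)" using m by simp
    then have "Ob \<in> vorbits \<Gamma> V" using invr by auto
    then have "y \<in> V" using Ob(2) vorbit_sub unfolding vorbits_def by auto
    then have "y \<in> set vs" using sv by simp
    then obtain t where t: "t < length vs" "vs ! t = y" by (auto simp: in_set_conv_nth)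
    have "\<not> t < j"
    proof
      assume "t < j"
      then have "y \<in> \<Union> (set (?P i))" using j(4) t(2) by auto
      then obtain Ob' where Ob': "Ob' \<in> set (?P i)" "y \<in> Ob'" by auto
      then obtain l where l: "l < length (?P i)" "Ob' = ?P i ! l" by (auto simp: in_set_conv_nth)
      have li: "l < i" using l(1) by (simp add: pco_len)
      have lr0: "l < ?r" using li ir by simp
      have "Ob' = ?P ?r ! l" using l(2) pco_nth[OF li, of "vorbit \<Gamma>" vs] pco_nth[OF lr0, of "vorbit \<Gamma>" vs]
        by simp
      moreover have lr: "l < length (?P ?r)" using lr0 by (simp add: pco_len)
      ultimately have O'P: "Ob' \<in> set (?P ?r)" by simp
      obtain z where z: "Ob = vorbit \<Gamma> z" using orbs ObP by blast
      obtain z' where z': "Ob' = vorbit \<Gamma> z'" using orbs O'P by blast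
      have "vorbit \<Gamma> y = Ob" using vorbit_same Ob(2) z by simp
      moreover have "vorbit \<Gamma> y = Ob'" using vorbit_same Ob'(2) z' by simp
      ultimately have "Ob = Ob'" by simp
      then have "?P ?r ! m = ?P ?r ! l" using m \<open>Ob' = ?P ?r ! l\<close> by simp
      then have "m = l" using nth_eq_iff_index_eq[OF invr(1) m(2) lr] by simp
      then show False using li m by simp
    qed
    then have "drop j vs ! (t - j) = y" using t j by simp
    moreover have "t - j < length (drop j vs)" using t \<open>\<not> t < j\<close> by simp
    ultimately show "y \<in> set (drop j vs)" using nth_mem[of "t - j" "drop j vs"] by simp
  qed
  have "simplicial adj (set (drop j vs)) x" using p j(1) unfolding peo_def x_def by auto
  then have sx: "simplicial adj ?T x" using Tsub unfolding simplicial_def by blast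
  have Tinv: "\<forall>\<tau>\<in>\<Gamma>. \<forall>y\<in>?T. \<tau> y \<in> ?T"
  proof (intro ballI)
    fix \<tau> y assume t: "\<tau> \<in> \<Gamma>" and yT: "y \<in> ?T"
    from yT obtain Ob where Ob: "Ob \<in> set (drop i (?P ?r))" "y \<in> Ob" by (rule UnionE)
    have "Ob \<in> set (?P ?r)" using Ob(1) by (rule in_set_dropD)
    then obtain z where "Ob = vorbit \<Gamma> z" using orbs by blast
    then have "\<tau> y \<in> Ob" using vorbit_G[OF t] Ob(2) by simp
    then show "\<tau> y \<in> ?T" using Ob(1) by (rule UnionI[rotated])
  qed
  obtain \<sigma> where s: "\<sigma> \<in> \<Gamma>" "v = \<sigma> x" using v Pi unfolding vorbit_def by auto
  show "simplicial adj ?T v" using simpl_G[OF Tinv s(1) sx] s(2) by simp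
qed

end


theorem lemma3p11:
  fixes V :: "'a set" and adj :: "'a \<Rightarrow> 'a \<Rightarrow> bool" and \<Gamma> :: "('a \<Rightarrow> 'a) set"
  assumes G: "simple_graph V adj"
    and sub: "subgroup_Aut \<Gamma> V adj"
  shows "(\<forall>ord. color_order \<Gamma> V ord \<longrightarrow> M1 V adj \<Gamma> ord)
    \<and> (\<forall>vs. peo V adj vs \<longrightarrow>
          cpeo adj (peo_color_order (vorbit \<Gamma>) vs (card (vorbits \<Gamma> V))))
    \<and> (decomposable V adj \<longrightarrow>
          (\<forall>ord. color_order \<Gamma> V ord \<and> cpeo adj ord \<longrightarrow> CER V adj \<Gamma> ord))
    \<and> (decomposable V adj \<and> (generously_transitive \<Gamma> V \<or> cyclic_grp \<Gamma>) \<longrightarrow>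
          (\<forall>ord. color_order \<Gamma> V ord \<and> cpeo adj ord \<longrightarrow> symCER V adj \<Gamma> ord))"
proof -
  have m1: "M1 V adj \<Gamma> ord" if "color_order \<Gamma> V ord" for ord
    using M1_holds[OF G sub color_order_orb[OF G sub that]] .
  have p2: "cpeo adj (peo_color_order (vorbit \<Gamma>) vs (card (vorbits \<Gamma> V)))" if "peo V adj vs" for vs
    using part2[OF G sub that] .
  have m2: "M2 V adj \<Gamma> ord" if "color_order \<Gamma> V ord" "generously_transitive \<Gamma> V \<or> cyclic_grp \<Gamma>" for ord
    using M2_holds[OF G sub color_order_orb[OF G sub that(1)] that(2)] .
  show ?thesis unfolding symCER_def CER_def using m1 p2 m2 by blast
qed

end
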